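(* Let $G$ and $H$ be connected bipartite circulant graphs on $2n$ and $2m$ vertices respectively, where $\gcd(n,m) = 1$. Then $G \otimes H$ is a circulant graph.
   Context: Graphs have no multiple edges but may have loops. The tensor product $G \otimes H$ of graphs $G$ and $H$ has vertex set $V(G)\times V(H)$, with $(g,h)$ adjacent to $(g',h')$ if and only if $g$ is adjacent to $g'$ in $G$ and $h$ is adjacent to $h'$ in $H$. For an integer $N\ge 1$ and a set $S$ of integers, the circulant graph $C_NS$ has vertex set $\{0,\dots,N-1\}$, with $i$ adjacent to $j$ iff $i-j \equiv \pm s \pmod N$ for some $s\in S$; a graph is circulant if it is isomorphic to some $C_NS$ (this includes disconnected graphs); equivalently, if it has an automorphism that permutes all its vertices in a single cycle. *)

theory Defs
  imports "HOL-Number_Theory.Cong"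
begin

definition graph :: "'a set \<Rightarrow> ('a \<Rightarrow> 'a \<Rightarrow> bool) \<Rightarrow> bool" where
  "graph V adj \<longleftrightarrow> finite V \<and> (\<forall>u v. adj u v \<longrightarrow> u \<in> V \<and> v \<in> V)
     \<and> (\<forall>u v. adj u v \<longrightarrow> adj v u)"

definition connected_graph :: "'a set \<Rightarrow> ('a \<Rightarrow> 'a \<Rightarrow> bool) \<Rightarrow> bool" where
  "connected_graph V adj \<longleftrightarrow> (\<forall>u\<in>V. \<forall>v\<in>V. adj\<^sup>*\<^sup>* u v)"

definition bipartite :: "'a set \<Rightarrow> ('a \<Rightarrow> 'a \<Rightarrow> bool) \<Rightarrow> bool" where
  "bipartite V adj \<longleftrightarrow> (\<exists>A B. V = A \<union> B \<and> A \<inter> B = {} \<and>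
     (\<forall>u v. adj u v \<longrightarrow> (u \<in> A \<and> v \<in> B) \<or> (u \<in> B \<and> v \<in> A)))"

definition circ_adj :: "nat \<Rightarrow> int set \<Rightarrow> nat \<Rightarrow> nat \<Rightarrow> bool" where
  "circ_adj N S i j \<longleftrightarrow> i < N \<and> j < N \<and>
     (\<exists>s\<in>S. [int i - int j = s] (mod int N) \<or> [int i - int j = - s] (mod int N))"

definition circulant :: "'a set \<Rightarrow> ('a \<Rightarrow> 'a \<Rightarrow> bool) \<Rightarrow> bool" where
  "circulant V adj \<longleftrightarrow> (\<exists>N S f. bij_betw f V {0..<N} \<and>
     (\<forall>u\<in>V. \<forall>v\<in>V. adj u v \<longleftrightarrow> circ_adj N S (f u) (f v)))"

definition tensor_adj :: "('a \<Rightarrow> 'a \<Rightarrow> bool) \<Rightarrow> ('b \<Rightarrow> 'b \<Rightarrow> bool) \<Rightarrow>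
    'a \<times> 'b \<Rightarrow> 'a \<times> 'b \<Rightarrow> bool" where
  "tensor_adj adjG adjH x y \<longleftrightarrow> adjG (fst x) (fst y) \<and> adjH (snd x) (snd y)"

end

theory Submission
  imports Defs
begin

lemma circ_adj_cong:
  assumes "i < N" "j < N" "i' < N" "j' < N"
    and e: "[int i - int j = int i' - int j'] (mod int N)"
  shows "circ_adj N S i j = circ_adj N S i' j'"
proof -
  have "[int i - int j = s] (mod int N) \<longleftrightarrow> [int i' - int j' = s] (mod int N)" for s
    using e cong_sym cong_trans by metis
  then show ?thesis using assms(1-4) unfolding circ_adj_def by simp
qed

lemma int_mod_cong: "[int (a mod N) = int a] (mod int N)"
  unfolding cong_def by (simp add: of_nat_mod)

lemma circ_adj_shift:
  assumes "N > 0" "circ_adj N S (x mod N) (y mod N)"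
  shows "circ_adj N S ((x + c) mod N) ((y + c) mod N)"
proof -
  have a: "[int ((x + c) mod N) - int ((y + c) mod N) = int (x + c) - int (y + c)] (mod int N)"
    by (intro cong_diff int_mod_cong)
  have b: "[int (x mod N) - int (y mod N) = int x - int y] (mod int N)"
    by (intro cong_diff int_mod_cong)
  have "int (x + c) - int (y + c) = int x - int y" by simp
  with a b have "[int ((x + c) mod N) - int ((y + c) mod N) = int (x mod N) - int (y mod N)] (mod int N)"
    by (metis cong_sym cong_trans)
  then show ?thesis using assms circ_adj_cong[of "(x + c) mod N" N "(y + c) mod N" "x mod N" "y mod N" S]
    by simp
qed

lemma shift_iter:
  assumes "\<And>k l. Q k l \<Longrightarrow> Q (Suc k) (Suc l)"
  shows "Q k l \<Longrightarrow> Q (k + r) (l + r)"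
  by (induction r) (auto intro: assms)

lemma nat_cong_from_int:
  assumes "(int M) dvd (int a - int b)" "b < M"
  shows "a mod M = b"
proof -
  have "[int a = int b] (mod int M)" using assms(1) by (simp add: cong_iff_dvd_diff)
  then have "[a = b] (mod M)" by (simp add: cong_int_iff)
  then show ?thesis using assms(2) unfolding cong_def by simp
qed

lemma circ_from_periodic:
  fixes Q :: "nat \<Rightarrow> nat \<Rightarrow> bool"
  assumes M: "M > 0"
    and sym: "\<And>k l. Q k l \<Longrightarrow> Q l k"
    and sh: "\<And>k l. Q k l \<Longrightarrow> Q (Suc k) (Suc l)"
    and per: "\<And>k l. Q k l = Q (k mod M) (l mod M)"
    and kl: "k < M" "l < M"
  shows "Q k l = circ_adj M {int j | j. Q 0 j} k l"
proof
  assume q: "Q k l"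
  have "Q (k + (M - k)) (l + (M - k))" using shift_iter[of Q, OF sh q] .
  moreover have "k + (M - k) = M" using kl by simp
  ultimately have "Q M (l + (M - k))" by simp
  moreover have "Q M x = Q 0 (x mod M)" for x using per[of M x] by simp
  ultimately have q0: "Q 0 ((l + (M - k)) mod M)" by simp
  define s where "s = (l + (M - k)) mod M"
  define t where "t = (l + (M - k)) div M"
  have "l + (M - k) = M * t + s" unfolding s_def t_def by simp
  then have "int (l + (M - k)) = int (M * t + s)" by simp
  then have "int l + int M - int k = int M * int t + int s" using kl by (simp add: of_nat_diff)
  then have "int k - int l - (- int s) = int M * (1 - int t)" by (simp add: algebra_simps)
  then have "[int k - int l = - int s] (mod int M)" unfolding cong_iff_dvd_diff by simp
  then show "circ_adj M {int j | j. Q 0 j} k l" unfolding circ_adj_def using kl q0 s_def by blast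
next
  assume "circ_adj M {int j | j. Q 0 j} k l"
  then obtain j where j: "Q 0 j" and c: "[int k - int l = int j] (mod int M) \<or> [int k - int l = - int j] (mod int M)"
    unfolding circ_adj_def by blast
  from c show "Q k l"
  proof
    assume c1: "[int k - int l = int j] (mod int M)"
    have "Q j 0" using sym j .
    then have "Q (j + l) l" using shift_iter[of Q, OF sh, of j 0 l] by simp
    then have "Q ((j + l) mod M) l" using per[of "j + l" l] per[of "(j + l) mod M" l] by simp
    moreover have "(j + l) mod M = k"
    proof (rule nat_cong_from_int)
      have "int M dvd (int k - int l - int j)" using c1 unfolding cong_iff_dvd_diff .
      moreover have "int (j + l) - int k = - (int k - int l - int j)" by simp
      ultimately show "int M dvd (int (j + l) - int k)" by (simp only: dvd_minus_iff)
    qed (rule kl)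
    ultimately show ?thesis by simp
  next
    assume c1: "[int k - int l = - int j] (mod int M)"
    have "Q k (j + k)" using shift_iter[of Q, OF sh j, of k] by simp
    then have "Q k ((j + k) mod M)" using per[of k "j + k"] per[of k "(j + k) mod M"] by simp
    moreover have "(j + k) mod M = l"
    proof (rule nat_cong_from_int)
      have "int M dvd (int k - int l - - int j)" using c1 unfolding cong_iff_dvd_diff .
      then show "int M dvd (int (j + k) - int l)" by (simp add: algebra_simps)
    qed (rule kl)
    ultimately show ?thesis by simp
  qed
qed


lemma bip_parity:
  fixes C :: "nat \<Rightarrow> nat \<Rightarrow> bool" and c :: "nat \<Rightarrow> bool"
  assumes N: "N = 2 * n" "n > 0"
    and dom: "\<And>i j. C i j \<Longrightarrow> i < N \<and> j < N"
    and col: "\<And>i j. C i j \<Longrightarrow> c i \<noteq> c j"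
    and rot: "\<And>i j. C i j \<Longrightarrow> C (Suc i mod N) (Suc j mod N)"
    and conn: "\<And>i j. i < N \<Longrightarrow> j < N \<Longrightarrow> C\<^sup>*\<^sup>* i j"
    and e: "C i j"
  shows "odd (i + j)"
proof -
  define d where "d i = (c i \<noteq> c (Suc i mod N))" for i
  have dstep: "d i = d j" if "C i j" for i j
  proof -
    have "c i \<noteq> c j" using col that .
    moreover have "c (Suc i mod N) \<noteq> c (Suc j mod N)" using col rot that by blast
    ultimately show ?thesis unfolding d_def by blast
  qed
  have dconn: "d i = d j" if "C\<^sup>*\<^sup>* i j" for i j
    using that by (induction rule: rtranclp_induct) (auto dest: dstep)
  have dconst: "d i = d 0" if "i < N" for i
    using dconn conn[of i 0] that N by simp
  have "C\<^sup>*\<^sup>* 0 1" using conn N by simp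
  then obtain x where x: "C 0 x" by (metis converse_rtranclpE zero_neq_one)
  have d0: "d 0"
  proof (rule ccontr)
    assume nd: "\<not> d 0"
    have "i < N \<Longrightarrow> c i = c 0" for i
    proof (induction i)
      case 0 then show ?case by simp
    next
      case (Suc i)
      then have "c i = c 0" "\<not> d i" using dconst nd by auto
      then show ?case using Suc.prems unfolding d_def by simp
    qed
    then show False using x dom col by metis
  qed
  have alt: "i < N \<Longrightarrow> c i = (c 0 = even i)" for i
  proof (induction i)
    case 0 then show ?case by simp
  next
    case (Suc i)
    then have "c i = (c 0 = even i)" "d i" using dconst d0 by auto
    then show ?case using Suc.prems unfolding d_def by auto
  qed
  show ?thesis using e dom col alt by fastforce
qed


lemma circ_adj_sym: "circ_adj N S i j \<Longrightarrow> circ_adj N S j i"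
  unfolding circ_adj_def
proof (elim conjE bexE)
  fix s assume h: "i < N" "j < N" "s \<in> S"
    "[int i - int j = s] (mod int N) \<or> [int i - int j = - s] (mod int N)"
  have "[int j - int i = - s] (mod int N) \<or> [int j - int i = - (- s)] (mod int N)"
    using h(4) cong_minus_minus_iff[of "int i - int j" s "int N"] cong_minus_minus_iff[of "int i - int j" "- s" "int N"]
    by auto
  then show "j < N \<and> i < N \<and> (\<exists>s\<in>S. [int j - int i = s] (mod int N) \<or> [int j - int i = - s] (mod int N))"
    using h by auto
qed

lemma even_mod_2n: "even (x mod (2 * n)) = even (x::nat)"
  by (simp add: dvd_mod_iff)

definition psi :: "nat \<Rightarrow> nat \<Rightarrow> nat \<Rightarrow> nat \<times> nat" where
  "psi n m k = ((k div 2 + k mod 2) mod (2 * n), (k div 2) mod (2 * m))"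

lemma psi_per:
  shows "psi n m (k mod (4 * n * m)) = psi n m k"
proof -
  define M where "M = 4 * n * m"
  define q where "q = k div M"
  define r where "r = k mod M"
  have k0: "k = M * q + r" unfolding q_def r_def by simp
  have "M * q = (2 * n * m * q) * 2" unfolding M_def by simp
  then have k: "k = r + (2 * n * m * q) * 2" using k0 by simp
  have a: "k div 2 = r div 2 + 2 * n * m * q" unfolding k by (subst div_mult_self1) auto
  have b: "k mod 2 = r mod 2" unfolding k by (rule mod_mult_self1)
  have c1: "(r div 2 + r mod 2 + (m * q) * (2 * n)) mod (2 * n) = (r div 2 + r mod 2) mod (2 * n)"
    by (rule mod_mult_self1)
  have c2: "(r div 2 + (n * q) * (2 * m)) mod (2 * m) = (r div 2) mod (2 * m)"
    by (rule mod_mult_self1)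
  have "psi n m k = psi n m r" unfolding psi_def a b using c1 c2
    by (simp add: algebra_simps)
  then show ?thesis unfolding r_def M_def by simp
qed

lemma psi_inj:
  assumes "coprime n m" "k < 4 * n * m" "l < 4 * n * m" "psi n m k = psi n m l"
  shows "k = l"
proof -
  define a where "a = k div 2"
  define b where "b = k mod 2"
  define a' where "a' = l div 2"
  define b' where "b' = l mod 2"
  have e1: "(a + b) mod (2 * n) = (a' + b') mod (2 * n)" and e2: "a mod (2 * m) = a' mod (2 * m)"
    using assms(4) unfolding psi_def a_def b_def a'_def b'_def by auto
  have "even (a + b) = even (a' + b')" using e1 even_mod_2n by metis
  moreover have "even a = even a'" using e2 even_mod_2n by metis
  moreover have "b < 2" "b' < 2" unfolding b_def b'_def by auto
  ultimately have bb: "b = b'" by presburger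
  have "[a = a'] (mod 2 * n)" using e1 unfolding bb cong_def[symmetric] cong_add_rcancel_nat .
  moreover have "[a = a'] (mod 2 * m)" using e2 unfolding cong_def .
  ultimately have "[a = a'] (mod lcm (2 * n) (2 * m))" by (rule cong_cong_lcm_nat)
  moreover have "lcm (2 * n) (2 * m) = 2 * n * m"
    using assms(1) by (simp add: lcm_mult_left lcm_coprime)
  ultimately have "[a = a'] (mod 2 * n * m)" by simp
  moreover have "a < 2 * n * m" "a' < 2 * n * m" using assms(2,3) unfolding a_def a'_def by auto
  ultimately have "a = a'" using cong_less_modulus_unique_nat by blast
  then show ?thesis using bb unfolding a_def a'_def b_def b'_def by (metis div_mult_mod_eq)
qed


lemma prod_circ:
  assumes n: "n > 0" and m: "m > 0" and cop: "coprime n m"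
    and pG: "\<And>i j. circ_adj (2 * n) S i j \<Longrightarrow> odd (i + j)"
    and pH: "\<And>i j. circ_adj (2 * m) T i j \<Longrightarrow> odd (i + j)"
  shows "circulant ({0..<2 * n} \<times> {0..<2 * m})
           (\<lambda>x y. circ_adj (2 * n) S (fst x) (fst y) \<and> circ_adj (2 * m) T (snd x) (snd y))"
proof -
  define P where "P = (\<lambda>x y. circ_adj (2 * n) S (fst x) (fst y) \<and> circ_adj (2 * m) T (snd x) (snd y))"
  define M where "M = 4 * n * m"
  define V where "V = {0..<2 * n} \<times> {0..<2 * m}"
  define Q where "Q = (\<lambda>k l. P (psi n m k) (psi n m l))"
  have M0: "M > 0" using n m unfolding M_def by simp
  have inj: "inj_on (psi n m) {0..<M}"
    by (rule inj_onI) (use psi_inj[OF cop] in \<open>auto simp: M_def\<close>)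
  have sub: "psi n m ` {0..<M} \<subseteq> V" using n m unfolding V_def psi_def by auto
  have "card (psi n m ` {0..<M}) = card V"
    using card_image[OF inj] unfolding V_def M_def by simp
  then have img: "psi n m ` {0..<M} = V"
    using sub card_subset_eq[of V "psi n m ` {0..<M}"] unfolding V_def by simp
  have bij: "bij_betw (psi n m) {0..<M} V" using inj img unfolding bij_betw_def by simp
  have per: "Q k l = Q (k mod M) (l mod M)" for k l
    unfolding Q_def M_def psi_per ..
  have sym: "Q k l \<Longrightarrow> Q l k" for k l
    unfolding Q_def P_def using circ_adj_sym by blast
  have sh: "Q (Suc k) (Suc l)" if q: "Q k l" for k l
  proof -
    define a where "a = k div 2"
    define a' where "a' = l div 2"
    have q1: "circ_adj (2 * n) S ((a + k mod 2) mod (2 * n)) ((a' + l mod 2) mod (2 * n))"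
      and q2: "circ_adj (2 * m) T (a mod (2 * m)) (a' mod (2 * m))"
      using q unfolding Q_def P_def psi_def a_def a'_def by auto
    have "odd ((a + k mod 2) mod (2 * n) + (a' + l mod 2) mod (2 * n))" using pG q1 .
    then have o1: "odd (a + k mod 2 + (a' + l mod 2))" using even_mod_2n by (metis even_add)
    have "odd (a mod (2 * m) + a' mod (2 * m))" using pH q2 .
    then have o2: "odd (a + a')" using even_mod_2n by (metis even_add)
    have kl: "k mod 2 = l mod 2" using o1 o2 by presburger
    show ?thesis
    proof (cases "even k")
      case True
      then have ev: "even l" using kl by presburger
      have "Suc k div 2 = a" "Suc k mod 2 = 1" "k mod 2 = 0" using True unfolding a_def by auto
      moreover have "Suc l div 2 = a'" "Suc l mod 2 = 1" "l mod 2 = 0" using ev unfolding a'_def by auto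
      moreover have "circ_adj (2 * n) S ((a + 1) mod (2 * n)) ((a' + 1) mod (2 * n))"
        using circ_adj_shift[of "2 * n" S a a' 1] q1 n \<open>k mod 2 = 0\<close> \<open>l mod 2 = 0\<close> by simp
      ultimately show ?thesis using q2 unfolding Q_def P_def psi_def by simp
    next
      case False
      then have ev: "odd l" using kl by presburger
      have "Suc k div 2 = a + 1" "Suc k mod 2 = 0" "k mod 2 = 1" using False unfolding a_def by (auto simp: odd_iff_mod_2_eq_one)
      moreover have "Suc l div 2 = a' + 1" "Suc l mod 2 = 0" "l mod 2 = 1" using ev unfolding a'_def by (auto simp: odd_iff_mod_2_eq_one)
      moreover have "circ_adj (2 * m) T ((a + 1) mod (2 * m)) ((a' + 1) mod (2 * m))"
        using circ_adj_shift[of "2 * m" T a a' 1] q2 m by simp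
      ultimately show ?thesis using q1 unfolding Q_def P_def psi_def by simp
    qed
  qed
  define h where "h = inv_into {0..<M} (psi n m)"
  have hb: "bij_betw h V {0..<M}" unfolding h_def by (rule bij_betw_inv_into[OF bij])
  have "P x y = circ_adj M {int j | j. Q 0 j} (h x) (h y)" if "x \<in> V" "y \<in> V" for x y
  proof -
    have hx: "h x < M" "psi n m (h x) = x" using that hb img unfolding h_def
      by (auto simp: bij_betw_def f_inv_into_f inv_into_into)
    have hy: "h y < M" "psi n m (h y) = y" using that hb img unfolding h_def
      by (auto simp: bij_betw_def f_inv_into_f inv_into_into)
    have "P x y = Q (h x) (h y)" unfolding Q_def using hx hy by simp
    also have "\<dots> = circ_adj M {int j | j. Q 0 j} (h x) (h y)"
      by (rule circ_from_periodic[of M Q, OF M0 sym sh per hx(1) hy(1)])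
    finally show ?thesis .
  qed
  then show ?thesis unfolding circulant_def P_def[symmetric] V_def[symmetric] using hb by blast
qed


lemma circ_graph_parity:
  assumes g: "graph V adj" and c: "connected_graph V adj" and b: "bipartite V adj"
    and f: "bij_betw f V {0..<N}"
    and iso: "\<forall>u\<in>V. \<forall>v\<in>V. adj u v \<longleftrightarrow> circ_adj N S (f u) (f v)"
    and N: "N = 2 * n" "n > 0"
    and e: "circ_adj N S i j"
  shows "odd (i + j)"
proof -
  obtain A B where AB: "V = A \<union> B" "A \<inter> B = {}"
    "\<forall>u v. adj u v \<longrightarrow> (u \<in> A \<and> v \<in> B) \<or> (u \<in> B \<and> v \<in> A)"
    using b unfolding bipartite_def by blast
  define finv where "finv = inv_into V f"
  have fi: "finv i \<in> V" "f (finv i) = i" if "i < N" for i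
    using that f unfolding finv_def bij_betw_def by (auto simp: f_inv_into_f inv_into_into)
  define C where "C = circ_adj N S"
  define col where "col i = (finv i \<in> A)" for i
  have dom: "C i j \<Longrightarrow> i < N \<and> j < N" for i j unfolding C_def circ_adj_def by simp
  have colr: "col i \<noteq> col j" if "C i j" for i j
  proof -
    have "adj (finv i) (finv j)" using iso fi dom[OF that] that unfolding C_def by metis
    then show ?thesis using AB unfolding col_def by blast
  qed
  have rot: "C (Suc i mod N) (Suc j mod N)" if "C i j" for i j
    using circ_adj_shift[of N S i j 1] dom[OF that] that N unfolding C_def by simp
  have lift: "C\<^sup>*\<^sup>* (f u) (f v)" if "adj\<^sup>*\<^sup>* u v" for u v
    using that
  proof (induction rule: rtranclp_induct)
    case base then show ?case by simp
  next
    case (step w v)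
    then have "w \<in> V" "v \<in> V" using g unfolding graph_def by auto
    then have "C (f w) (f v)" using iso step unfolding C_def by blast
    then show ?case using step by simp
  qed
  have conn: "C\<^sup>*\<^sup>* i j" if "i < N" "j < N" for i j
    using lift[of "finv i" "finv j"] fi[OF that(1)] fi[OF that(2)] c unfolding connected_graph_def by simp
  show ?thesis
    using bip_parity[of N n C col i j, OF N dom colr rot conn] e unfolding C_def by blast
qed

lemma circ_iso:
  assumes "circulant W adj'" "bij_betw h V W" "\<forall>u\<in>V. \<forall>v\<in>V. adj u v = adj' (h u) (h v)"
  shows "circulant V adj"
proof -
  obtain N S f where f: "bij_betw f W {0..<N}" "\<forall>u\<in>W. \<forall>v\<in>W. adj' u v \<longleftrightarrow> circ_adj N S (f u) (f v)"
    using assms(1) unfolding circulant_def by blast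
  have "bij_betw (f \<circ> h) V {0..<N}" using bij_betw_trans[OF assms(2) f(1)] .
  moreover have "\<forall>u\<in>V. \<forall>v\<in>V. adj u v \<longleftrightarrow> circ_adj N S ((f \<circ> h) u) ((f \<circ> h) v)"
    using assms(2,3) f(2) unfolding bij_betw_def by auto
  ultimately show ?thesis unfolding circulant_def by blast
qed

theorem theorem10:
  fixes VG :: "'a set" and adjG :: "'a \<Rightarrow> 'a \<Rightarrow> bool"
    and VH :: "'b set" and adjH :: "'b \<Rightarrow> 'b \<Rightarrow> bool"
    and n m :: nat
  assumes "graph VG adjG" and "connected_graph VG adjG" and "bipartite VG adjG"
    and "circulant VG adjG" and "card VG = 2 * n"
    and "graph VH adjH" and "connected_graph VH adjH" and "bipartite VH adjH"
    and "circulant VH adjH" and "card VH = 2 * m"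
    and "gcd n m = 1"
  shows "circulant (VG \<times> VH) (tensor_adj adjG adjH)"
proof (cases "n = 0 \<or> m = 0")
  case True
  have "finite VG" "finite VH" using assms(1,6) unfolding graph_def by auto
  then have "VG = {} \<or> VH = {}" using True assms(5,10) by auto
  then have "VG \<times> VH = {}" by blast
  moreover have "circulant ({} :: ('a \<times> 'b) set) (tensor_adj adjG adjH)"
    unfolding circulant_def by (rule exI[of _ 0]) (auto intro!: exI[of _ id] simp: bij_betw_def)
  ultimately show ?thesis by (simp only:)
next
  case False
  then have n: "n > 0" and m: "m > 0" by auto
  have cop: "coprime n m" using assms(11) by (simp add: coprime_iff_gcd_eq_1)
  obtain N S f where f: "bij_betw f VG {0..<N}" "\<forall>u\<in>VG. \<forall>v\<in>VG. adjG u v \<longleftrightarrow> circ_adj N S (f u) (f v)"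
    using assms(4) unfolding circulant_def by blast
  have NN: "N = 2 * n" using bij_betw_same_card[OF f(1)] assms(5) by simp
  obtain K T g where g: "bij_betw g VH {0..<K}" "\<forall>u\<in>VH. \<forall>v\<in>VH. adjH u v \<longleftrightarrow> circ_adj K T (g u) (g v)"
    using assms(9) unfolding circulant_def by blast
  have KK: "K = 2 * m" using bij_betw_same_card[OF g(1)] assms(10) by simp
  have pG: "odd (i + j)" if "circ_adj (2 * n) S i j" for i j
    using circ_graph_parity[OF assms(1-3) f(1) f(2)] NN n that by blast
  have pH: "odd (i + j)" if "circ_adj (2 * m) T i j" for i j
    using circ_graph_parity[OF assms(6-8) g(1) g(2)] KK m that by blast
  have pc: "circulant ({0..<2 * n} \<times> {0..<2 * m})
           (\<lambda>x y. circ_adj (2 * n) S (fst x) (fst y) \<and> circ_adj (2 * m) T (snd x) (snd y))"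
    by (rule prod_circ[OF n m cop pG pH])
  have hb: "bij_betw (map_prod f g) (VG \<times> VH) ({0..<2 * n} \<times> {0..<2 * m})"
    using bij_betw_map_prod[OF f(1) g(1)] NN KK by simp
  show ?thesis
    by (rule circ_iso[OF pc hb]) (use f(2) g(2) NN KK in \<open>auto simp: tensor_adj_def\<close>)
qed

end
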